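(* Let $(H,\circ,N,\star,\boxdot)$ be a right skew bracoid, and for $h\in H$ let $\beta(h):N\to N$ be the map $\eta^{\beta(h)}=\overline{\eta}\star(\eta\boxdot h)\star\overline{(e_N\boxdot h)}$. Then for every $h\in H$ and $\mu,\eta\in N$: (1) $(\mu\star\eta)^{\beta(h)}=\overline{\eta}\star(\mu^{\beta(h)})\star\eta\star(\eta^{\beta(h)})$; (2) $e_N^{\beta(h)}=\eta^{\beta(e_H)}=e_N$; (3) $\overline{\eta}^{\beta(h)}=\eta\star\overline{(\eta^{\beta(h)})}\star\overline{\eta}$.
   Context: For a group $(N,\star)$, $e_N$ denotes its identity and $\overline{\eta}$ the inverse of $\eta$; $e_H$ is the identity of $(H,\circ)$. A right skew bracoid is a 5-tuple $(H,\circ,N,\star,\boxdot)$ where $(H,\circ)$ and $(N,\star)$ are groups and $\boxdot$ is a transitive right action of $(H,\circ)$ on the set $N$ such that $(\eta\star\mu)\boxdot h=(\eta\boxdot h)\star\overline{(e_N\boxdot h)}\star(\mu\boxdot h)$ for all $h\in H$, $\eta,\mu\in N$. *)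

theory Defs
  imports "HOL-Algebra.Group"
begin

definition right_action :: "('a, 'c) monoid_scheme \<Rightarrow> 'b set \<Rightarrow> ('b \<Rightarrow> 'a \<Rightarrow> 'b) \<Rightarrow> bool" where
  "right_action H S act \<longleftrightarrow>
     (\<forall>h \<in> carrier H. \<forall>x \<in> S. act x h \<in> S) \<and>
     (\<forall>x \<in> S. act x \<one>\<^bsub>H\<^esub> = x) \<and>
     (\<forall>g \<in> carrier H. \<forall>h \<in> carrier H. \<forall>x \<in> S. act (act x g) h = act x (g \<otimes>\<^bsub>H\<^esub> h))"

definition transitive_right_action :: "('a, 'c) monoid_scheme \<Rightarrow> 'b set \<Rightarrow> ('b \<Rightarrow> 'a \<Rightarrow> 'b) \<Rightarrow> bool" where
  "transitive_right_action H S act \<longleftrightarrow> right_action H S act \<and>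
     (\<forall>x \<in> S. \<forall>y \<in> S. \<exists>h \<in> carrier H. act x h = y)"

definition right_skew_bracoid :: "('a, 'c) monoid_scheme \<Rightarrow> ('b, 'd) monoid_scheme \<Rightarrow> ('b \<Rightarrow> 'a \<Rightarrow> 'b) \<Rightarrow> bool" where
  "right_skew_bracoid H N act \<longleftrightarrow> group H \<and> group N \<and>
     transitive_right_action H (carrier N) act \<and>
     (\<forall>h \<in> carrier H. \<forall>x \<in> carrier N. \<forall>y \<in> carrier N.
        act (x \<otimes>\<^bsub>N\<^esub> y) h = act x h \<otimes>\<^bsub>N\<^esub> inv\<^bsub>N\<^esub> (act \<one>\<^bsub>N\<^esub> h) \<otimes>\<^bsub>N\<^esub> act y h)"

definition bracoid_beta :: "('b, 'd) monoid_scheme \<Rightarrow> ('b \<Rightarrow> 'a \<Rightarrow> 'b) \<Rightarrow> 'a \<Rightarrow> 'b \<Rightarrow> 'b" where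
  "bracoid_beta N act h x = inv\<^bsub>N\<^esub> x \<otimes>\<^bsub>N\<^esub> act x h \<otimes>\<^bsub>N\<^esub> inv\<^bsub>N\<^esub> (act \<one>\<^bsub>N\<^esub> h)"

end

theory Submission
  imports Defs
begin

theorem lemma2p8:
  fixes H :: "('a, 'c) monoid_scheme" and N :: "('b, 'd) monoid_scheme"
    and act :: "'b \<Rightarrow> 'a \<Rightarrow> 'b"
  assumes "right_skew_bracoid H N act"
    and "h \<in> carrier H" and "mu \<in> carrier N" and "eta \<in> carrier N"
  shows "(bracoid_beta N act h (mu \<otimes>\<^bsub>N\<^esub> eta)
           = inv\<^bsub>N\<^esub> eta \<otimes>\<^bsub>N\<^esub> bracoid_beta N act h mu \<otimes>\<^bsub>N\<^esub> eta
               \<otimes>\<^bsub>N\<^esub> bracoid_beta N act h eta)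
         \<and> (bracoid_beta N act h \<one>\<^bsub>N\<^esub> = \<one>\<^bsub>N\<^esub>
              \<and> bracoid_beta N act \<one>\<^bsub>H\<^esub> eta = \<one>\<^bsub>N\<^esub>)
         \<and> (bracoid_beta N act h (inv\<^bsub>N\<^esub> eta)
           = eta \<otimes>\<^bsub>N\<^esub> inv\<^bsub>N\<^esub> (bracoid_beta N act h eta) \<otimes>\<^bsub>N\<^esub> inv\<^bsub>N\<^esub> eta)"
proof -
  have gN: "group N" and gH: "group H" using assms(1) unfolding right_skew_bracoid_def by auto
  have ra: "right_action H (carrier N) act" using assms(1)
    unfolding right_skew_bracoid_def transitive_right_action_def by auto
  have cl: "\<And>x. x \<in> carrier N \<Longrightarrow> act x h \<in> carrier N" using ra assms(2)
    unfolding right_action_def by auto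
  have id: "\<And>x. x \<in> carrier N \<Longrightarrow> act x \<one>\<^bsub>H\<^esub> = x" using ra unfolding right_action_def by auto
  have cmp: "\<And>x y. x \<in> carrier N \<Longrightarrow> y \<in> carrier N \<Longrightarrow>
        act (x \<otimes>\<^bsub>N\<^esub> y) h = act x h \<otimes>\<^bsub>N\<^esub> inv\<^bsub>N\<^esub> (act \<one>\<^bsub>N\<^esub> h) \<otimes>\<^bsub>N\<^esub> act y h"
    using assms(1,2) unfolding right_skew_bracoid_def by auto
  interpret N: group N by (rule gN)
  have ca1[simp]: "\<And>x y. x \<in> carrier N \<Longrightarrow> y \<in> carrier N \<Longrightarrow> x \<otimes>\<^bsub>N\<^esub> (inv\<^bsub>N\<^esub> x \<otimes>\<^bsub>N\<^esub> y) = y"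
    by (simp flip: N.m_assoc add: N.r_inv)
  have ca2[simp]: "\<And>x y. x \<in> carrier N \<Longrightarrow> y \<in> carrier N \<Longrightarrow> inv\<^bsub>N\<^esub> x \<otimes>\<^bsub>N\<^esub> (x \<otimes>\<^bsub>N\<^esub> y) = y"
    by (simp flip: N.m_assoc add: N.l_inv)
  define c where "c = act \<one>\<^bsub>N\<^esub> h"
  have c: "c \<in> carrier N" unfolding c_def by (rule cl) simp
  have mh: "act mu h \<in> carrier N" and eh: "act eta h \<in> carrier N" using cl assms by auto
  have p1: "bracoid_beta N act h (mu \<otimes>\<^bsub>N\<^esub> eta)
           = inv\<^bsub>N\<^esub> eta \<otimes>\<^bsub>N\<^esub> bracoid_beta N act h mu \<otimes>\<^bsub>N\<^esub> eta
               \<otimes>\<^bsub>N\<^esub> bracoid_beta N act h eta"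
    unfolding bracoid_beta_def cmp[OF assms(3,4)] c_def[symmetric]
    using assms(3,4) c mh eh by (simp add: N.m_assoc N.inv_mult_group)
  have p2: "bracoid_beta N act h \<one>\<^bsub>N\<^esub> = \<one>\<^bsub>N\<^esub>"
    unfolding bracoid_beta_def c_def[symmetric] using c by (simp add: N.r_inv)
  have p3: "bracoid_beta N act \<one>\<^bsub>H\<^esub> eta = \<one>\<^bsub>N\<^esub>"
    unfolding bracoid_beta_def using assms(4) by (simp add: id N.l_inv)
  have ei: "inv\<^bsub>N\<^esub> eta \<in> carrier N" using assms(4) by simp
  have eih: "act (inv\<^bsub>N\<^esub> eta) h \<in> carrier N" using cl ei by auto
  have key: "c = act eta h \<otimes>\<^bsub>N\<^esub> inv\<^bsub>N\<^esub> c \<otimes>\<^bsub>N\<^esub> act (inv\<^bsub>N\<^esub> eta) h"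
    using cmp[OF assms(4) ei] assms(4) unfolding c_def by simp
  have eq: "act (inv\<^bsub>N\<^esub> eta) h = c \<otimes>\<^bsub>N\<^esub> inv\<^bsub>N\<^esub> (act eta h) \<otimes>\<^bsub>N\<^esub> c"
  proof -
    have "c \<otimes>\<^bsub>N\<^esub> inv\<^bsub>N\<^esub> (act eta h) \<otimes>\<^bsub>N\<^esub> c
        = c \<otimes>\<^bsub>N\<^esub> inv\<^bsub>N\<^esub> (act eta h) \<otimes>\<^bsub>N\<^esub> (act eta h \<otimes>\<^bsub>N\<^esub> inv\<^bsub>N\<^esub> c \<otimes>\<^bsub>N\<^esub> act (inv\<^bsub>N\<^esub> eta) h)"
      using key by simp
    also have "\<dots> = act (inv\<^bsub>N\<^esub> eta) h" using c eh eih
      by (simp add: N.m_assoc)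
    finally show ?thesis by simp
  qed
  have p4: "bracoid_beta N act h (inv\<^bsub>N\<^esub> eta)
           = eta \<otimes>\<^bsub>N\<^esub> inv\<^bsub>N\<^esub> (bracoid_beta N act h eta) \<otimes>\<^bsub>N\<^esub> inv\<^bsub>N\<^esub> eta"
    unfolding bracoid_beta_def c_def[symmetric] eq using assms(4) c eh
    by (simp add: N.m_assoc N.inv_mult_group)
  show ?thesis using p1 p2 p3 p4 by blast
qed

end
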